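(* Assume (1) $D\in C^4(\mathbb{R}^d)$, $\rho_{eq}\in C^4(\mathbb{R}^d)$ with $\rho_{eq}>0$, and all partial derivatives of $D$ and $\ln\rho_{eq}$ of orders $1$ through $4$ are bounded; (2) $\|\nabla^2D(x)\|$ and $\|\nabla^2\ln\rho_{eq}(x)\|$ are bounded by a polynomial in $x$, and $\inf_xD(x)>0$. Let $g:\mathbb{R}^d\to\mathbb{R}$ be a polynomial. Then there are functions $K(x)$, $K^*(x)$ of at most polynomial growth such that for all $x\in\mathbb{R}^d$ and $\epsilon\in(0,1]$, $$\Big|\int_{\mathbb{R}^d} z\,q(x,z)\big(\beta(x,z,\epsilon)-1\big)\,dz-a(x)\epsilon\Big|\le K(x)\epsilon^2,\qquad \Big|\int_{\mathbb{R}^d} g(z)\,q(x,z)\big(\beta(x,z,\epsilon)-1\big)\,dz\Big|\le K^*(x)\epsilon.$$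
   Context: Define $a(x)=\nabla D(x)+D(x)\nabla\ln\rho_{eq}(x)$, $q(x,z)=(4\pi D(x))^{-d/2}\exp\big(-\frac{|z|^2}{4D(x)}\big)$ for $x,z\in\mathbb{R}^d$, and $$\beta(x,z,\epsilon)=\min\Big(1,\exp\Big(\epsilon\frac{\nabla_xq(x,z)\cdot z}{q(x,z)}+\epsilon\frac{\nabla\rho_{eq}(x)\cdot z}{\rho_{eq}(x)}\Big)\Big),$$ where $\nabla_x$ denotes the gradient in the first argument. *)

theory Defs
  imports "HOL-Analysis.Analysis"
begin

definition pd :: "'n::finite \<Rightarrow> (real^'n \<Rightarrow> real) \<Rightarrow> real^'n \<Rightarrow> real" where
  "pd i f x = deriv (\<lambda>t. f (x + t *\<^sub>R axis i 1)) 0"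

fun ipd :: "'n::finite list \<Rightarrow> (real^'n \<Rightarrow> real) \<Rightarrow> real^'n \<Rightarrow> real" where
  "ipd [] f = f"
| "ipd (i # is) f = pd i (ipd is f)"

definition Ck :: "nat \<Rightarrow> (real^'n::finite \<Rightarrow> real) \<Rightarrow> bool" where
  "Ck k f \<longleftrightarrow>
     (\<forall>is i x. length is < k \<longrightarrow>
        (\<lambda>t. ipd is f (x + t *\<^sub>R axis i 1)) field_differentiable (at 0)) \<and>
     (\<forall>is. length is \<le> k \<longrightarrow> continuous_on UNIV (ipd is f))"

definition grad :: "(real^'n::finite \<Rightarrow> real) \<Rightarrow> real^'n \<Rightarrow> real^'n" where
  "grad f x = (\<chi> i. pd i f x)"

definition hess :: "(real^'n::finite \<Rightarrow> real) \<Rightarrow> real^'n \<Rightarrow> real^'n^'n" where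
  "hess f x = (\<chi> i j. ipd [i, j] f x)"

definition poly_growth :: "('a::real_normed_vector \<Rightarrow> real) \<Rightarrow> bool" where
  "poly_growth K \<longleftrightarrow> (\<exists>C (N::nat). \<forall>x. \<bar>K x\<bar> \<le> C * (1 + norm x) ^ N)"

inductive_set poly_fun :: "(real^'n::finite \<Rightarrow> real) set" where
  const: "(\<lambda>_. c) \<in> poly_fun"
| coord: "(\<lambda>x. x $ i) \<in> poly_fun"
| add: "f \<in> poly_fun \<Longrightarrow> g \<in> poly_fun \<Longrightarrow> (\<lambda>x. f x + g x) \<in> poly_fun"
| mult: "f \<in> poly_fun \<Longrightarrow> g \<in> poly_fun \<Longrightarrow> (\<lambda>x. f x * g x) \<in> poly_fun"

definition drift :: "(real^'n::finite \<Rightarrow> real) \<Rightarrow> (real^'n \<Rightarrow> real) \<Rightarrow> real^'n \<Rightarrow> real^'n" where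
  "drift D \<rho> x = grad D x + D x *\<^sub>R grad (\<lambda>y. ln (\<rho> y)) x"

definition qk :: "(real^'n::finite \<Rightarrow> real) \<Rightarrow> real^'n \<Rightarrow> real^'n \<Rightarrow> real" where
  "qk D x z = (4 * pi * D x) powr (- real CARD('n) / 2) * exp (- (norm z)\<^sup>2 / (4 * D x))"

definition acc :: "(real^'n::finite \<Rightarrow> real) \<Rightarrow> (real^'n \<Rightarrow> real) \<Rightarrow> real^'n \<Rightarrow> real^'n \<Rightarrow> real \<Rightarrow> real" where
  "acc D \<rho> x z \<epsilon> = min 1 (exp (\<epsilon> * (grad (\<lambda>y. qk D y z) x \<bullet> z) / qk D x z
                                 + \<epsilon> * (grad \<rho> x \<bullet> z) / \<rho> x))"

end

theory Submission
  imports Defs "HOL-Probability.Probability"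
begin

lemma lborel_prod_euclid:
  fixes f :: "'a::euclidean_space \<Rightarrow> real \<Rightarrow> real"
  assumes int: "\<And>b. integrable lborel (f b)"
  shows "integrable lborel (\<lambda>x::'a. \<Prod>b\<in>Basis. f b (x \<bullet> b))
     \<and> (\<integral>x. (\<Prod>b\<in>Basis. f b (x \<bullet> b)) \<partial>lborel) = (\<Prod>b\<in>Basis. \<integral>t. f b t \<partial>lborel)"
proof -
  interpret P: product_sigma_finite "\<lambda>_::'a. lborel::real measure"
    by (simp add: product_sigma_finite_def lborel.sigma_finite_measure_axioms)
  have [measurable]: "\<And>b. f b \<in> borel_measurable borel"
    using int borel_measurable_integrable by auto
  have T[measurable]: "(\<lambda>\<omega>. \<Sum>b\<in>Basis. \<omega> b *\<^sub>R b) \<in> measurable (PiM Basis (\<lambda>_. lborel)) (borel::'a measure)"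
    by measurable
  have eq: "\<And>\<omega>. (\<Prod>b\<in>Basis. f b ((\<Sum>b'\<in>Basis. \<omega> b' *\<^sub>R b') \<bullet> b)) = (\<Prod>b\<in>Basis. f b (\<omega> b))"
    by (intro prod.cong refl) (simp add: inner_sum_left inner_Basis if_distrib sum.delta cong: if_cong)
  have i: "integrable (PiM Basis (\<lambda>_. lborel)) (\<lambda>\<omega>. \<Prod>b\<in>Basis. f b (\<omega> b))"
    by (rule P.product_integrable_prod) (auto intro: int)
  show ?thesis
    apply (subst (1 2) lborel_eq)
    apply (simp add: integrable_distr_eq integral_distr eq i)
    apply (rule P.product_integral_prod)
     apply (auto intro: int)
    done
qed

lemma Basis_cart_eq: "(Basis :: (real^'n::finite) set) = range (\<lambda>i. axis i 1)"
  using axis_inverse axis_in_Basis_iff by (auto)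

lemma lborel_prod_cart:
  fixes h :: "'n::finite \<Rightarrow> real \<Rightarrow> real"
  assumes int: "\<And>i. integrable lborel (h i)"
  shows "integrable lborel (\<lambda>z::real^'n. \<Prod>i\<in>UNIV. h i (z$i))
     \<and> (\<integral>z. (\<Prod>i\<in>UNIV. h i (z$i)) \<partial>lborel) = (\<Prod>i\<in>UNIV. \<integral>t. h i t \<partial>lborel)"
proof -
  define f where "f b = h (SOME i. b = axis i (1::real))" for b :: "real^'n"
  have fa: "f (axis i 1) = h i" for i
    unfolding f_def by (rule arg_cong[where f=h]) (auto simp: axis_eq_axis)
  have inj: "inj (\<lambda>i::'n. axis i (1::real))"
    by (auto simp: inj_def axis_eq_axis)
  have P: "(\<Prod>b\<in>(Basis::(real^'n) set). F b) = (\<Prod>i\<in>UNIV. F (axis i 1))" for F :: "real^'n \<Rightarrow> real"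
    unfolding Basis_cart_eq by (subst prod.reindex[OF inj]) simp
  have "\<And>b. integrable lborel (f b)" unfolding f_def by (rule int)
  from lborel_prod_euclid[of f, OF this]
  show ?thesis unfolding P fa by (simp add: inner_axis)
qed

definition qs :: "real \<Rightarrow> real^'n::finite \<Rightarrow> real" where
  "qs s z = (4 * pi * s) powr (- real CARD('n) / 2) * exp (- (norm z)\<^sup>2 / (4 * s))"

lemma qk_qs: "qk D x z = qs (D x) z"
  by (simp add: qk_def qs_def)

lemma norm_sq_cart: "(norm (z::real^'n::finite))\<^sup>2 = (\<Sum>i\<in>UNIV. (z$i)\<^sup>2)"
  by (subst power2_norm_eq_inner) (simp add: inner_vec_def power2_eq_square)

lemma qs_prod:
  assumes s: "s > 0"
  shows "qs s (z::real^'n::finite) = (\<Prod>i\<in>UNIV. normal_density 0 (sqrt (2* s)) (z$i))"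
proof -
  have nd: "normal_density 0 (sqrt (2* s)) t = (1 / sqrt (4*pi* s)) * exp (- t\<^sup>2 / (4* s))" for t
    using s by (simp add: normal_density_def)
  have "(\<Prod>i\<in>UNIV. normal_density 0 (sqrt (2* s)) (z$i))
      = (1 / sqrt (4*pi* s)) ^ CARD('n) * exp (\<Sum>i\<in>UNIV. - (z$i)\<^sup>2 / (4* s))"
    unfolding nd prod.distrib prod_constant by (simp add: exp_sum)
  also have "(\<Sum>i\<in>UNIV. - (z$i)\<^sup>2 / (4* s)) = - (norm z)\<^sup>2 / (4 * s)"
    by (simp add: norm_sq_cart sum_divide_distrib sum_negf)
  also have "(1 / sqrt (4*pi* s)) ^ CARD('n) = (4 * pi * s) powr (- real CARD('n) / 2)"
  proof -
    have p: "4*pi* s > 0" using s by simp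
    have "(1 / sqrt (4*pi* s)) ^ CARD('n) = ((4*pi* s) powr (-1/2)) ^ CARD('n)"
      using p by (simp add: powr_minus_divide powr_half_sqrt)
    also have "\<dots> = (4*pi* s) powr (real CARD('n) * (-1/2))"
      using p by (intro powr_power) auto
    finally show ?thesis by simp
  qed
  finally show ?thesis by (simp add: qs_def)
qed

definition mu :: "real \<Rightarrow> nat \<Rightarrow> real" where
  "mu \<sigma> k = (\<integral>t. normal_density 0 \<sigma> t * t ^ k \<partial>lborel)"

lemma qs_mono:
  assumes s: "s > 0"
  shows "integrable lborel (\<lambda>z::real^'n::finite. qs s z * (\<Prod>i\<in>UNIV. (z$i)^(n i)))
    \<and> (\<integral>z. qs s z * (\<Prod>i\<in>UNIV. (z$i)^(n i)) \<partial>lborel) = (\<Prod>i\<in>UNIV. mu (sqrt (2* s)) (n i))"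
proof -
  have e: "qs s z * (\<Prod>i\<in>UNIV. (z$i)^(n i)) = (\<Prod>i\<in>UNIV. normal_density 0 (sqrt (2* s)) (z$i) * (z$i)^(n i))" for z :: "real^'n"
    using s by (simp add: qs_prod prod.distrib)
  have sp: "0 < sqrt (2 * s)" using s by simp
  have I: "\<And>i. integrable lborel (\<lambda>t. normal_density 0 (sqrt (2 * s)) t * t^(n i))"
    using integrable_normal_moment[OF sp, of 0] by simp
  from lborel_prod_cart[of "\<lambda>i t. normal_density 0 (sqrt (2 * s)) t * t^(n i)", OF I] show ?thesis unfolding e mu_def by simp
qed

lemma mu_vals:
  assumes s: "s > 0"
  shows "mu (sqrt (2* s)) 0 = 1" "mu (sqrt (2* s)) 1 = 0" "mu (sqrt (2* s)) 2 = 2* s"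
    "mu (sqrt (2* s)) 3 = 0" "mu (sqrt (2* s)) 4 = 12* s\<^sup>2"
proof -
  let ?\<sigma> = "sqrt (2* s)"
  have sp: "?\<sigma> > 0" using s by simp
  show "mu ?\<sigma> 0 = 1" unfolding mu_def using integral_normal_density[OF sp] by simp
  show "mu ?\<sigma> 1 = 0" unfolding mu_def
    using integral_normal_moment_odd[OF sp, of 0 0] by simp
  show "mu ?\<sigma> 3 = 0" unfolding mu_def
    using integral_normal_moment_odd[OF sp, of 0 1] by (simp add: numeral_3_eq_3)
  show "mu ?\<sigma> 2 = 2* s" unfolding mu_def
    using integral_normal_moment_even[OF sp, of 0 1] s by (simp add: numeral_2_eq_2)
  show "mu ?\<sigma> 4 = 12* s\<^sup>2" unfolding mu_def
    using integral_normal_moment_even[OF sp, of 0 2] s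
    by (simp add: fact_numeral power2_eq_square field_simps)
qed


lemma mu_vals_suc:
  assumes s: "s > 0"
  shows "mu (sqrt (2* s)) (Suc (Suc 0)) = 2* s" "mu (sqrt (2* s)) (Suc (Suc (Suc (Suc 0)))) = 12* s\<^sup>2"
    "mu (sqrt (2* s)) (Suc (Suc (Suc 0))) = 0" "mu (sqrt (2* s)) (Suc 0) = 0"
  using mu_vals[OF s] by (simp_all add: numeral_2_eq_2 numeral_3_eq_3 eval_nat_numeral)

definition ee :: "'n \<Rightarrow> 'n \<Rightarrow> nat" where "ee i l = (if l = i then 1 else 0)"

lemma prod_ee: "(\<Prod>l\<in>UNIV. ((z::real^'n::finite)$l)^(ee i l)) = z$i"
proof -
  have "(\<Prod>l\<in>UNIV. (z$l)^(ee i l)) = (\<Prod>l\<in>UNIV. if l = i then z$l else 1)"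
    by (rule prod.cong) (auto simp: ee_def)
  then show ?thesis by simp
qed

lemma prod_pow_add: "(\<Prod>l\<in>UNIV. ((z::real^'n::finite)$l)^(a l + b l)) = (\<Prod>l\<in>UNIV. (z$l)^(a l)) * (\<Prod>l\<in>UNIV. (z$l)^(b l))"
  by (simp add: power_add prod.distrib)

lemma qs_T2:
  assumes s: "s > 0"
  shows "integrable lborel (\<lambda>z::real^'n::finite. qs s z * (z$i * z$j))
    \<and> (\<integral>z. qs s z * (z$i * z$j) \<partial>lborel) = (if i = j then 2 * s else 0)"
proof -
  let ?n = "\<lambda>l. ee i l + ee j l"
  have m: "(\<Prod>l\<in>UNIV. (z$l)^(?n l)) = z$i * z$j" for z :: "real^'n"
    by (simp only: prod_pow_add prod_ee)
  have v: "(\<Prod>l\<in>UNIV. mu (sqrt (2 * s)) (?n l)) = (if i = j then 2 * s else 0)"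
  proof (cases "i = j")
    case True
    have "(\<Prod>l\<in>UNIV. mu (sqrt (2 * s)) (?n l)) = (\<Prod>l\<in>UNIV. if l = j then 2 * s else 1)"
      by (rule prod.cong) (auto simp: ee_def True mu_vals[OF s] mu_vals_suc[OF s])
    then show ?thesis using True by simp
  next
    case False
    have "mu (sqrt (2 * s)) (?n i) = 0" using False by (simp add: ee_def mu_vals[OF s] mu_vals_suc[OF s])
    then show ?thesis using False by (intro trans[OF prod_zero]) auto
  qed
  show ?thesis using qs_mono[OF s, of ?n] unfolding m v by simp
qed

lemma qs_T4:
  assumes s: "s > 0"
  shows "integrable lborel (\<lambda>z::real^'n::finite. qs s z * (z$i * z$j * (z$k * z$k)))
    \<and> (\<integral>z. qs s z * (z$i * z$j * (z$k * z$k)) \<partial>lborel)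
        = (if i = j then (if k = j then 12 * s\<^sup>2 else 4 * s\<^sup>2) else 0)"
proof -
  let ?n = "\<lambda>l. ee i l + ee j l + (ee k l + ee k l)"
  have m: "(\<Prod>l\<in>UNIV. (z$l)^(?n l)) = z$i * z$j * (z$k * z$k)" for z :: "real^'n"
    by (simp only: prod_pow_add prod_ee)
  have v: "(\<Prod>l\<in>UNIV. mu (sqrt (2 * s)) (?n l)) = (if i = j then (if k = j then 12 * s\<^sup>2 else 4 * s\<^sup>2) else 0)"
  proof (cases "i = j")
    case True
    show ?thesis
    proof (cases "k = j")
      case True2: True
      have "(\<Prod>l\<in>UNIV. mu (sqrt (2 * s)) (?n l)) = (\<Prod>l\<in>UNIV. if l = j then 12 * s\<^sup>2 else 1)"
        by (rule prod.cong) (auto simp: ee_def True True2 mu_vals[OF s] mu_vals_suc[OF s])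
      then show ?thesis using True True2 by simp
    next
      case False2: False
      have "(\<Prod>l\<in>UNIV. mu (sqrt (2 * s)) (?n l)) = (\<Prod>l\<in>UNIV. (if l = j then 2 * s else 1) * (if l = k then 2 * s else 1))"
        by (rule prod.cong) (use False2 in \<open>auto simp: ee_def True mu_vals[OF s] mu_vals_suc[OF s]\<close>)
      also have "\<dots> = 4 * s\<^sup>2" by (simp add: prod.distrib power2_eq_square)
      finally show ?thesis using True False2 by simp
    qed
  next
    case False
    have "mu (sqrt (2 * s)) (?n j) = 0" using False
      by (cases "k = j") (simp_all add: ee_def mu_vals[OF s] mu_vals_suc[OF s])
    then show ?thesis using False by (intro trans[OF prod_zero]) auto
  qed
  show ?thesis using qs_mono[OF s, of ?n] unfolding m v by simp
qed


lemma qs_measurable[measurable]: "qs s \<in> borel_measurable borel"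
  unfolding qs_def[abs_def] by measurable

lemma qs_pos: "s > 0 \<Longrightarrow> qs s z > 0"
  by (simp add: qs_def)

lemma qs_int1:
  assumes s: "s > 0"
  shows "integrable lborel (qs s :: real^'n::finite \<Rightarrow> real) \<and> (\<integral>z. qs s (z::real^'n) \<partial>lborel) = 1"
  using qs_mono[OF s, of "\<lambda>_. 0"] mu_vals(1)[OF s] by simp

lemma pow_le_fact_exp:
  assumes y: "(y::real) \<ge> 0"
  shows "y ^ m \<le> fact m * exp y"
proof -
  obtain t where t: "exp y = (\<Sum>k<Suc m. y ^ k / fact k) + exp t / fact (Suc m) * y ^ Suc m"
    using Maclaurin_exp_le[of y "Suc m"] by blast
  have "y ^ m / fact m \<le> (\<Sum>k<Suc m. y ^ k / fact k)"
    by (rule member_le_sum[where f="\<lambda>k. y ^ k / fact k", of m]) (use y in auto)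
  also have "\<dots> \<le> exp y" unfolding t using y by simp
  finally show ?thesis by (simp add: field_simps)
qed

lemma one_plus_pow_le:
  assumes t: "(t::real) \<ge> 0"
  shows "(1 + t) ^ m \<le> 2 ^ m * (2 + t ^ (2 * m))"
proof (cases "t \<le> 1")
  case True
  have "(1 + t) ^ m \<le> 2 ^ m" by (rule power_mono) (use True t in auto)
  also have "\<dots> \<le> 2 ^ m * (2 + t ^ (2 * m))" using t by simp
  finally show ?thesis .
next
  case False
  have "(1 + t) ^ m \<le> (2 * t) ^ m" by (rule power_mono) (use False in auto)
  also have "\<dots> = 2 ^ m * t ^ m" by (simp add: power_mult_distrib)
  also have "t ^ m \<le> t ^ (2 * m)" by (rule power_increasing) (use False in auto)
  then have "2 ^ m * t ^ m \<le> 2 ^ m * (2 + t ^ (2 * m))" by simp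
  finally show ?thesis .
qed

lemma qs_exp:
  assumes s: "s > 0"
  shows "qs s (z::real^'n::finite) * exp ((norm z)\<^sup>2 / (8 * s)) = 2 powr (real CARD('n) / 2) * qs (2 * s) z"
proof -
  have e1: "exp (- (norm z)\<^sup>2 / (4 * s)) * exp ((norm z)\<^sup>2 / (8 * s)) = exp (- (norm z)\<^sup>2 / (4 * (2 * s)))"
    by (simp add: exp_add[symmetric] field_simps)
  have e2: "(4 * pi * s) powr (- real CARD('n) / 2) = 2 powr (real CARD('n) / 2) * (4 * pi * (2 * s)) powr (- real CARD('n) / 2)"
  proof -
    have "(4 * pi * s) powr (- real CARD('n) / 2) = ((4 * pi * (2 * s)) / 2) powr (- real CARD('n) / 2)"
      by (rule arg_cong[where f="\<lambda>u. u powr (- real CARD('n) / 2)"]) simp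
    also have "\<dots> = (4 * pi * (2 * s)) powr (- real CARD('n) / 2) / 2 powr (- real CARD('n) / 2)"
      by (rule powr_divide; use s in auto)
    also have "\<dots> = 2 powr (real CARD('n) / 2) * (4 * pi * (2 * s)) powr (- real CARD('n) / 2)"
      by (simp add: powr_minus_divide field_simps)
    finally show ?thesis .
  qed
  have "qs s z * exp ((norm z)\<^sup>2 / (8 * s)) = (4 * pi * s) powr (- real CARD('n) / 2) * (exp (- (norm z)\<^sup>2 / (4 * s)) * exp ((norm z)\<^sup>2 / (8 * s)))"
    unfolding qs_def by (rule mult.assoc)
  also have "\<dots> = 2 powr (real CARD('n) / 2) * qs (2 * s) z"
    unfolding e1 e2 qs_def by (rule mult.assoc)
  finally show ?thesis .
qed

definition Wb :: "nat \<Rightarrow> nat \<Rightarrow> real \<Rightarrow> real" where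
  "Wb d m s = 2 ^ m * (2 + fact m * (8 * s) ^ m * 2 ^ d)"

lemma qs_weight:
  assumes s: "s > 0"
  shows "integrable lborel (\<lambda>z::real^'n::finite. qs s z * (1 + norm z) ^ m)
    \<and> (\<integral>z. qs s (z::real^'n) * (1 + norm z) ^ m \<partial>lborel) \<le> Wb CARD('n) m s"
proof -
  define B where "B z = 2 ^ m * (2 * qs s z + fact m * (8 * s) ^ m * (2 powr (real CARD('n) / 2) * qs (2 * s) z))" for z :: "real^'n"
  have s2: "2 * s > 0" using s by simp
  have iB: "integrable lborel B"
    unfolding B_def using qs_int1[OF s, where 'n='n] qs_int1[OF s2, where 'n='n] by simp
  have IB: "(\<integral>z. B z \<partial>lborel) = 2 ^ m * (2 + fact m * (8 * s) ^ m * 2 powr (real CARD('n) / 2))"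
    unfolding B_def using qs_int1[OF s, where 'n='n] qs_int1[OF s2, where 'n='n] by simp
  have pt: "qs s z * (1 + norm z) ^ m \<le> B z" for z
  proof -
    have q0: "qs s z \<ge> 0" using qs_pos[OF s] less_imp_le by blast
    have a: "(1 + norm z) ^ m \<le> 2 ^ m * (2 + norm z ^ (2 * m))" by (rule one_plus_pow_le) simp
    have "norm z ^ (2 * m) = (8 * s) ^ m * ((norm z)\<^sup>2 / (8 * s)) ^ m"
      using s by (simp add: power_mult power_divide)
    also have "\<dots> \<le> (8 * s) ^ m * (fact m * exp ((norm z)\<^sup>2 / (8 * s)))"
      by (rule mult_left_mono[OF pow_le_fact_exp]) (use s in auto)
    finally have b: "norm z ^ (2 * m) \<le> (8 * s) ^ m * (fact m * exp ((norm z)\<^sup>2 / (8 * s)))" .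
    have "qs s z * (1 + norm z) ^ m \<le> qs s z * (2 ^ m * (2 + (8 * s) ^ m * (fact m * exp ((norm z)\<^sup>2 / (8 * s)))))"
    proof (rule mult_left_mono[OF order_trans[OF a] q0])
      show "2 ^ m * (2 + norm z ^ (2 * m)) \<le> 2 ^ m * (2 + (8 * s) ^ m * (fact m * exp ((norm z)\<^sup>2 / (8 * s))))"
        using b by (intro mult_left_mono add_left_mono) auto
    qed
    also have "\<dots> = B z" unfolding B_def qs_exp[OF s, symmetric] by (simp add: algebra_simps)
    finally show ?thesis .
  qed
  have iW: "integrable lborel (\<lambda>z::real^'n. qs s z * (1 + norm z) ^ m)"
  proof (rule Bochner_Integration.integrable_bound[OF iB])
    have nn: "0 \<le> qs s z * (1 + norm z)^m" for z :: "real^'n"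
      using qs_pos[OF s, of z] by simp
    have "norm (qs s z * (1 + norm z) ^ m) \<le> norm (B z)" for z
      using nn[of z] pt[of z] by simp
    then show "AE z in lborel. norm (qs s z * (1 + norm z) ^ m) \<le> norm (B z)"
      by (auto intro!: always_eventually)
  qed simp
  have "(\<integral>z. qs s (z::real^'n) * (1 + norm z) ^ m \<partial>lborel) \<le> (\<integral>z. B z \<partial>lborel)"
    using pt by (intro Bochner_Integration.integral_mono iW iB) auto
  also have "\<dots> \<le> Wb CARD('n) m s"
  proof -
    have "2 powr (real CARD('n) / 2) \<le> 2 powr (real CARD('n))" by (intro powr_mono) auto
    also have "\<dots> = 2 ^ CARD('n)" by (simp add: powr_realpow)
    finally have "2 powr (real CARD('n) / 2) \<le> 2 ^ CARD('n)" .
    then have "fact m * (8 * s) ^ m * 2 powr (real CARD('n) / 2) \<le> fact m * (8 * s) ^ m * 2 ^ CARD('n)"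
      using s by (intro mult_left_mono) auto
    then show ?thesis unfolding IB Wb_def by simp
  qed
  finally show ?thesis by (rule conjI[OF iW])
qed


lemma Ck_line_deriv:
  assumes "Ck k f" "k \<ge> 1"
  shows "((\<lambda>t. f (x + t *\<^sub>R axis i 1)) has_real_derivative pd i f x) (at 0)"
proof -
  have "(\<lambda>t. ipd [] f (x + t *\<^sub>R axis i 1)) field_differentiable (at 0)"
    using assms unfolding Ck_def by (auto dest: spec[of _ "[]"])
  then show ?thesis
    unfolding pd_def by (simp add: DERIV_deriv_iff_field_differentiable)
qed

lemma Ck_line_deriv_at:
  assumes "Ck k f" "k \<ge> 1"
  shows "((\<lambda>t. f (x + t *\<^sub>R axis i 1)) has_real_derivative pd i f (x + t *\<^sub>R axis i 1)) (at t)"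
proof -
  have "((\<lambda>s. f ((x + t *\<^sub>R axis i 1) + s *\<^sub>R axis i 1)) has_real_derivative pd i f (x + t *\<^sub>R axis i 1)) (at 0)"
    by (rule Ck_line_deriv[OF assms])
  then have "((\<lambda>s. f (x + (s + t) *\<^sub>R axis i 1)) has_real_derivative pd i f (x + t *\<^sub>R axis i 1)) (at 0)"
    by (simp add: scaleR_add_left ac_simps)
  then show ?thesis using DERIV_shift[where f="\<lambda>u. f (x + u *\<^sub>R axis i 1)" and x=0 and z=t] by simp
qed

lemma mvt_abs:
  fixes g g' :: "real \<Rightarrow> real"
  assumes d: "\<And>t. (g has_real_derivative g' t) (at t)" and b: "\<And>t. \<bar>g' t\<bar> \<le> B"
  shows "\<bar>g b - g a\<bar> \<le> B * \<bar>b - a\<bar>"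
proof -
  have *: "\<bar>g q - g p\<bar> \<le> B * \<bar>q - p\<bar>" if "p < q" for p q
  proof -
    have "\<exists>z>p. z < q \<and> g q - g p = (q - p) * g' z"
      by (rule MVT2[OF that]) (rule d)
    then obtain z where "p < z" "z < q" "g q - g p = (q - p) * g' z" by blast
    then have "\<bar>g q - g p\<bar> = \<bar>q - p\<bar> * \<bar>g' z\<bar>" by (simp add: abs_mult)
    also have "\<dots> \<le> \<bar>q - p\<bar> * B" by (intro mult_left_mono b) simp
    finally show ?thesis by (simp add: mult.commute)
  qed
  consider "a < b" | "a = b" | "b < a" by linarith
  then show ?thesis
  proof cases
    case 3 from *[OF this] show ?thesis by (simp add: abs_minus_commute)
  qed (use * in auto)
qed

lemma lip_axis:
  fixes f :: "real^'n::finite \<Rightarrow> real"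
  assumes d: "\<And>i y t. ((\<lambda>t. f (y + t *\<^sub>R axis i 1)) has_real_derivative pd i f (y + t *\<^sub>R axis i 1)) (at t)"
    and b: "\<And>i y. \<bar>pd i f y\<bar> \<le> B"
  shows "\<bar>f x - f y\<bar> \<le> B * (\<Sum>i\<in>UNIV. \<bar>x$i - y$i\<bar>)"
proof -
  have "\<forall>x y. (\<forall>i. i \<notin> S \<longrightarrow> x$i = y$i) \<longrightarrow> \<bar>f x - f y\<bar> \<le> B * (\<Sum>i\<in>S. \<bar>x$i - y$i\<bar>)"
    if "finite S" for S :: "'n set"
    using that
  proof (induction S rule: finite_induct)
    case empty
    then show ?case by (auto simp: vec_eq_iff[symmetric])
  next
    case (insert k S)
    show ?case
    proof (intro allI impI)
      fix x y :: "real^'n" assume xy: "\<forall>i. i \<notin> insert k S \<longrightarrow> x $ i = y $ i"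
      define y' where "y' = y + (x$k - y$k) *\<^sub>R axis k 1"
      have y'i: "y'$i = (if i = k then x$k else y$i)" for i
        by (simp add: y'_def axis_def)
      have "\<forall>i. i \<notin> S \<longrightarrow> x$i = y'$i" using xy y'i by auto
      with insert.IH have 1: "\<bar>f x - f y'\<bar> \<le> B * (\<Sum>i\<in>S. \<bar>x$i - y'$i\<bar>)" by blast
      have "(\<Sum>i\<in>S. \<bar>x$i - y'$i\<bar>) = (\<Sum>i\<in>S. \<bar>x$i - y$i\<bar>)"
        using insert.hyps(2) y'i by (intro sum.cong) auto
      with 1 have 1: "\<bar>f x - f y'\<bar> \<le> B * (\<Sum>i\<in>S. \<bar>x$i - y$i\<bar>)" by simp
      have 2: "\<bar>f y' - f y\<bar> \<le> B * \<bar>x$k - y$k\<bar>"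
        using mvt_abs[where g="\<lambda>t. f (y + t *\<^sub>R axis k 1)" and g'="\<lambda>t. pd k f (y + t *\<^sub>R axis k 1)",
            OF d b, of "x$k - y$k" 0] by (simp add: y'_def)
      have "\<bar>f x - f y\<bar> \<le> \<bar>f x - f y'\<bar> + \<bar>f y' - f y\<bar>" by linarith
      also have "\<dots> \<le> B * (\<Sum>i\<in>S. \<bar>x$i - y$i\<bar>) + B * \<bar>x$k - y$k\<bar>" using 1 2 by linarith
      also have "\<dots> = B * (\<Sum>i\<in>insert k S. \<bar>x$i - y$i\<bar>)"
        using insert.hyps by (simp add: algebra_simps)
      finally show "\<bar>f x - f y\<bar> \<le> B * (\<Sum>i\<in>insert k S. \<bar>x$i - y$i\<bar>)" .
    qed
  qed
  from this[OF finite] show ?thesis by simp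
qed


lemma pd_qk:
  fixes D :: "real^'n::finite \<Rightarrow> real"
  assumes Ck: "Ck k D" "k \<ge> 1" and pos: "D x > 0"
  shows "pd i (\<lambda>y. qk D y z) x = qk D x z * (- (real CARD('n) / (2 * D x)) + (norm z)\<^sup>2 / (4 * (D x)\<^sup>2)) * pd i D x"
proof -
  define h where "h t = D (x + t *\<^sub>R axis i 1)" for t
  define h' where "h' = pd i D x"
  define r where "r = - real CARD('n) / 2"
  define N where "N = (norm z)\<^sup>2"
  have H: "(h has_real_derivative h') (at 0)" unfolding h_def h'_def by (rule Ck_line_deriv[OF Ck])
  have h0: "h 0 = D x" by (simp add: h_def)
  have g: "((\<lambda>t. 4 * pi * h t) has_real_derivative 4 * pi * h') (at 0)"
    by (rule derivative_eq_intros H refl)+ simp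
  have P: "((\<lambda>t. (4 * pi * h t) powr r) has_real_derivative r * (4 * pi * h 0) powr (r - 1) * (4 * pi * h')) (at 0)"
    using DERIV_fun_powr[OF g] pos h0 by simp
  have Q: "((\<lambda>t. - N / (4 * h t)) has_real_derivative N * (4 * h') / (4 * h 0)\<^sup>2) (at 0)"
  proof -
    have Q0: "((\<lambda>t. - N / (4 * h t)) has_real_derivative (0 * (4 * h 0) - (- N) * (4 * h')) / ((4 * h 0) * (4 * h 0))) (at 0)"
      by (rule DERIV_divide[OF DERIV_const DERIV_cmult[OF H]]) (use pos h0 in simp)
    have eqn: "(0 * (4 * h 0) - (- N) * (4 * h')) / ((4 * h 0) * (4 * h 0)) = N * (4 * h') / (4 * h 0)\<^sup>2"
      by (simp add: power2_eq_square)
    from Q0 show ?thesis by (simp only: eqn)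
  qed
  have E: "((\<lambda>t. exp (- N / (4 * h t))) has_real_derivative exp (- N / (4 * h 0)) * (N * (4 * h') / (4 * h 0)\<^sup>2)) (at 0)"
    by (rule DERIV_chain2[OF DERIV_exp Q])
  have PE: "((\<lambda>t. (4 * pi * h t) powr r * exp (- N / (4 * h t))) has_real_derivative
      r * (4 * pi * h 0) powr (r - 1) * (4 * pi * h') * exp (- N / (4 * h 0))
      + (exp (- N / (4 * h 0)) * (N * (4 * h') / (4 * h 0)\<^sup>2)) * (4 * pi * h 0) powr r) (at 0)"
    by (rule DERIV_mult[OF P E])
  have eqf: "(\<lambda>t. qk D (x + t *\<^sub>R axis i 1) z) = (\<lambda>t. (4 * pi * h t) powr r * exp (- N / (4 * h t)))"
    by (simp add: qk_def h_def r_def N_def)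
  have D1: "pd i (\<lambda>y. qk D y z) x = r * (4 * pi * h 0) powr (r - 1) * (4 * pi * h') * exp (- N / (4 * h 0))
      + (exp (- N / (4 * h 0)) * (N * (4 * h') / (4 * h 0)\<^sup>2)) * (4 * pi * h 0) powr r"
    unfolding pd_def eqf by (rule DERIV_imp_deriv[OF PE])
  have p1: "(4 * pi * h 0) powr (r - 1) = (4 * pi * h 0) powr r / (4 * pi * h 0)"
    using pos h0 by (simp add: powr_diff)
  have q1: "qk D x z = (4 * pi * h 0) powr r * exp (- N / (4 * h 0))"
    by (simp add: qk_def h0 r_def N_def)
  have hp: "h 0 > 0" using pos h0 by simp
  show ?thesis unfolding D1 q1 p1 h0[symmetric] N_def[symmetric] h'_def[symmetric]
    using hp unfolding r_def by (simp add: field_simps power2_eq_square)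
qed

lemma pd_ln:
  assumes Ck: "Ck k \<rho>" "k \<ge> 1" and pos: "\<forall>x. \<rho> x > 0"
  shows "pd i (\<lambda>y. ln (\<rho> y)) x = pd i \<rho> x / \<rho> x"
proof -
  have H: "((\<lambda>t. \<rho> (x + t *\<^sub>R axis i 1)) has_real_derivative pd i \<rho> x) (at 0)"
    by (rule Ck_line_deriv[OF Ck])
  have "((\<lambda>t. ln (\<rho> (x + t *\<^sub>R axis i 1))) has_real_derivative (1 / \<rho> x) * pd i \<rho> x) (at 0)"
    using DERIV_chain2[OF DERIV_ln_divide H] pos by simp
  then show ?thesis unfolding pd_def by (simp add: DERIV_imp_deriv)
qed


lemma acc_eq:
  fixes D \<rho> :: "real^'n::finite \<Rightarrow> real"
  assumes CD: "Ck k D" and C\<rho>: "Ck k \<rho>" and k: "k \<ge> 1" and Dp: "D x > 0" and \<rho>p: "\<forall>x. \<rho> x > 0"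
  shows "acc D \<rho> x z \<epsilon> = min 1 (exp (\<epsilon> * ((- (real CARD('n) / (2 * D x)) + (norm z)\<^sup>2 / (4 * (D x)\<^sup>2)) * (grad D x \<bullet> z)
            + grad (\<lambda>y. ln (\<rho> y)) x \<bullet> z)))"
proof -
  define c where "c = - (real CARD('n) / (2 * D x)) + (norm z)\<^sup>2 / (4 * (D x)\<^sup>2)"
  have g1: "grad (\<lambda>y. qk D y z) x = (qk D x z * c) *\<^sub>R grad D x"
    unfolding grad_def c_def by (simp add: vec_eq_iff pd_qk[OF CD k Dp])
  have qp: "qk D x z > 0" by (simp add: qk_qs qs_pos Dp)
  have g2: "(grad \<rho> x \<bullet> z) / \<rho> x = grad (\<lambda>y. ln (\<rho> y)) x \<bullet> z"
    unfolding grad_def inner_vec_def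
    by (simp add: pd_ln[OF C\<rho> k \<rho>p] sum_divide_distrib)
  have "\<epsilon> * (grad (\<lambda>y. qk D y z) x \<bullet> z) / qk D x z = \<epsilon> * (c * (grad D x \<bullet> z))"
    unfolding g1 using qp by simp
  moreover have "\<epsilon> * (grad \<rho> x \<bullet> z) / \<rho> x = \<epsilon> * (grad (\<lambda>y. ln (\<rho> y)) x \<bullet> z)"
    using g2 by (simp add: times_divide_eq_right[symmetric] del: times_divide_eq_right)
  ultimately show ?thesis unfolding acc_def c_def[symmetric] by (simp add: algebra_simps)
qed

lemma lborel_integral_neg:
  fixes f :: "'a::euclidean_space \<Rightarrow> 'b::{banach,second_countable_topology}"
  assumes [measurable]: "f \<in> borel_measurable borel"
  shows "(\<integral>x. f (- x) \<partial>lborel) = (\<integral>x. f x \<partial>lborel)"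
proof -
  have "lborel = density (distr lborel borel (\<lambda>x::'a. 0 + (-1) *\<^sub>R x)) (\<lambda>_. \<bar>-1::real\<bar> ^ DIM('a))"
    by (rule lborel_affine) simp
  then have L: "(lborel::'a measure) = distr lborel borel uminus" by (simp add: density_1)
  have "(\<integral>x. f x \<partial>lborel) = (\<integral>x. f x \<partial>distr lborel borel uminus)"
    by (subst L[symmetric]) rule
  also have "\<dots> = (\<integral>x. f (- x) \<partial>lborel)"
    by (rule integral_distr) simp_all
  finally show ?thesis by simp
qed

lemma odd_integral_zero:
  fixes f :: "'a::euclidean_space \<Rightarrow> 'b::{banach,second_countable_topology}"
  assumes [measurable]: "f \<in> borel_measurable borel" and odd: "\<And>x. f (- x) = - f x"
  shows "(\<integral>x. f x \<partial>lborel) = 0"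
proof -
  have "(\<integral>x. f x \<partial>lborel) = (\<integral>x. f (- x) \<partial>lborel)" by (rule lborel_integral_neg[symmetric]) simp
  also have "\<dots> = - (\<integral>x. f x \<partial>lborel)" by (simp add: odd)
  finally have "(\<integral>x. f x \<partial>lborel) + (\<integral>x. f x \<partial>lborel) = 0"
    by (simp add: eq_neg_iff_add_eq_0[symmetric])
  then have "(2::real) *\<^sub>R (\<integral>x. f x \<partial>lborel) = 0" by (simp add: scaleR_2)
  then show ?thesis by simp
qed

lemma poly_fun_meas: "g \<in> poly_fun \<Longrightarrow> g \<in> borel_measurable borel"
  by (induction rule: poly_fun.induct) auto

lemma poly_fun_bound:
  fixes g :: "real^'n::finite \<Rightarrow> real"
  assumes "g \<in> poly_fun"
  shows "\<exists>C N. C \<ge> 0 \<and> (\<forall>z. \<bar>g z\<bar> \<le> C * (1 + norm z) ^ N)"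
  using assms
proof (induction rule: poly_fun.induct)
  case (const c)
  then show ?case by (intro exI[of _ "\<bar>c\<bar>"] exI[of _ 0]) simp
next
  case (coord i)
  have "\<bar>z $ i\<bar> \<le> 1 * (1 + norm z) ^ 1" for z :: "real^'n"
    using component_le_norm_cart[of z i] by simp
  then show ?case by (intro exI[of _ "1::real"] exI[of _ "1::nat"]) simp
next
  case (add f g)
  then obtain C1 N1 C2 N2 where 1: "C1 \<ge> 0" "\<forall>z. \<bar>f z\<bar> \<le> C1 * (1 + norm z) ^ N1"
    and 2: "C2 \<ge> 0" "\<forall>z. \<bar>g z\<bar> \<le> C2 * (1 + norm z) ^ N2" by blast
  have "\<bar>f z + g z\<bar> \<le> (C1 + C2) * (1 + norm z) ^ max N1 N2" for z :: "real^'n"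
  proof -
    have a: "(1 + norm z) ^ N1 \<le> (1 + norm z) ^ max N1 N2" by (rule power_increasing) auto
    have b: "(1 + norm z) ^ N2 \<le> (1 + norm z) ^ max N1 N2" by (rule power_increasing) auto
    have "\<bar>f z + g z\<bar> \<le> C1 * (1 + norm z) ^ N1 + C2 * (1 + norm z) ^ N2"
      using 1(2) 2(2) abs_triangle_ineq[of "f z" "g z"] by (meson add_mono order_trans)
    also have "\<dots> \<le> C1 * (1 + norm z) ^ max N1 N2 + C2 * (1 + norm z) ^ max N1 N2"
      using 1(1) 2(1) a b by (intro add_mono mult_left_mono) auto
    finally show ?thesis by (simp add: algebra_simps)
  qed
  then show ?case using 1 2 by (intro exI[of _ "C1 + C2"] exI[of _ "max N1 N2"]) auto
next
  case (mult f g)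
  then obtain C1 N1 C2 N2 where 1: "C1 \<ge> 0" "\<forall>z. \<bar>f z\<bar> \<le> C1 * (1 + norm z) ^ N1"
    and 2: "C2 \<ge> 0" "\<forall>z. \<bar>g z\<bar> \<le> C2 * (1 + norm z) ^ N2" by blast
  have "\<bar>f z * g z\<bar> \<le> (C1 * C2) * (1 + norm z) ^ (N1 + N2)" for z :: "real^'n"
  proof -
    have "\<bar>f z * g z\<bar> = \<bar>f z\<bar> * \<bar>g z\<bar>" by (simp add: abs_mult)
    also have "\<dots> \<le> (C1 * (1 + norm z) ^ N1) * (C2 * (1 + norm z) ^ N2)"
      using 1 2 by (intro mult_mono) auto
    finally show ?thesis by (simp add: power_add algebra_simps)
  qed
  then show ?case using 1 2 by (intro exI[of _ "C1 * C2"] exI[of _ "N1 + N2"]) auto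
qed


lemma minexp_bound1: "\<bar>min 1 (exp L) - 1\<bar> \<le> \<bar>L::real\<bar>"
proof (cases "L \<ge> 0")
  case True then show ?thesis by (simp add: min_def)
next
  case False
  then have e1: "exp L \<le> 1" by simp
  have lo: "1 + L \<le> exp L" by (rule exp_ge_add_one_self)
  have mn: "min 1 (exp L) = exp L" using e1 by simp
  have aL: "\<bar>L\<bar> = - L" using False by simp
  show ?thesis unfolding mn aL abs_le_iff using lo e1 by (intro conjI) linarith+
qed

lemma minexp_bound2: "\<bar>min 1 (exp L) - 1 - (L - \<bar>L\<bar>) / 2\<bar> \<le> (L::real)\<^sup>2"
proof (cases "L \<ge> 0")
  case True then show ?thesis by (simp add: min_def)
next
  case False
  then have e1: "exp L \<le> 1" by simp
  have lo: "1 + L \<le> exp L" by (rule exp_ge_add_one_self)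
  have "1 - L \<le> exp (- L)" using exp_ge_add_one_self[of "-L"] by simp
  then have "exp L * (1 - L) \<le> exp L * exp (- L)" by (intro mult_left_mono) auto
  then have a: "exp L * (1 - L) \<le> 1" by (simp add: exp_minus)
  have "exp L \<le> 1 / (1 - L)" using a False by (simp add: field_simps)
  also have "\<dots> \<le> 1 + L + L\<^sup>2"
  proof -
    have e: "(1 - L) * (1 + L + L\<^sup>2) = 1 - L * L\<^sup>2"
      by (simp add: algebra_simps power2_eq_square)
    have "L * L\<^sup>2 \<le> 0" using False by (intro mult_nonpos_nonneg) auto
    then have "1 \<le> (1 - L) * (1 + L + L\<^sup>2)" unfolding e by linarith
    then show ?thesis using False by (simp add: field_simps)
  qed
  finally have up: "exp L \<le> 1 + L + L\<^sup>2" .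
  have mn: "min 1 (exp L) = exp L" using e1 by simp
  have aL: "\<bar>L\<bar> = - L" using False by simp
  have h2: "(L - - L) / 2 = L" by simp
  show ?thesis unfolding mn aL h2 abs_le_iff using lo up e1 zero_le_power2[of L] by (intro conjI) linarith+
qed


lemma expand_Lf:
  fixes u v z :: "real^'n::finite"
  shows "q * (\<epsilon> * ((\<alpha> + (norm z)\<^sup>2 * \<gamma>) * (u \<bullet> z) + v \<bullet> z) / 2) * z$j
    = (\<epsilon> / 2) * ((\<Sum>i\<in>UNIV. (\<alpha> * u$i + v$i) * (q * (z$i * z$j)))
        + \<gamma> * (\<Sum>i\<in>UNIV. \<Sum>k\<in>UNIV. u$i * (q * (z$i * z$j * (z$k * z$k)))))"
proof -
  have S1: "(\<Sum>i\<in>UNIV. (\<alpha> * u$i + v$i) * (q * (z$i * z$j))) = q * z$j * (\<alpha> * (u \<bullet> z) + v \<bullet> z)"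
    by (simp add: inner_vec_def sum_distrib_left sum.distrib[symmetric] algebra_simps)
  have S2: "(\<Sum>i\<in>UNIV. \<Sum>k\<in>UNIV. u$i * (q * (z$i * z$j * (z$k * z$k)))) = q * z$j * (u \<bullet> z) * (norm z)\<^sup>2"
    by (simp only: norm_sq_cart) (simp add: inner_vec_def sum_distrib_left sum_distrib_right power2_eq_square algebra_simps)
  show ?thesis unfolding S1 S2 by (simp add: algebra_simps)
qed

lemma sum_if_const: "(\<Sum>k\<in>(UNIV::'n::finite set). if k = j then a else b) = a + (real CARD('n) - 1) * b"
proof -
  have "(\<Sum>k\<in>(UNIV::'n set). if k = j then a else b) = (\<Sum>k\<in>(UNIV::'n set). b + (if k = j then a - b else 0))"
    by (rule sum.cong) auto
  also have "\<dots> = real CARD('n) * b + (a - b)" by (simp add: sum.distrib)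
  finally show ?thesis by (simp add: algebra_simps)
qed

lemma exact_term:
  fixes u v :: "real^'n::finite"
  assumes s: "s > 0"
    and int: "integrable lborel (\<lambda>z::real^'n. (qs s z * (\<epsilon> * ((- (real CARD('n) / (2 * s)) + (norm z)\<^sup>2 / (4 * s\<^sup>2)) * (u \<bullet> z) + v \<bullet> z) / 2)) *\<^sub>R z)"
  shows "(\<integral>z. (qs s z * (\<epsilon> * ((- (real CARD('n) / (2 * s)) + (norm z)\<^sup>2 / (4 * s\<^sup>2)) * (u \<bullet> z) + v \<bullet> z) / 2)) *\<^sub>R z \<partial>lborel)
     = \<epsilon> *\<^sub>R (u + s *\<^sub>R v)"
proof -
  define \<alpha> where "\<alpha> = - (real CARD('n) / (2 * s))"
  define \<gamma> where "\<gamma> = 1 / (4 * s\<^sup>2)"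
  have cf: "(- (real CARD('n) / (2 * s)) + (norm z)\<^sup>2 / (4 * s\<^sup>2)) = \<alpha> + (norm z)\<^sup>2 * \<gamma>" for z :: "real^'n"
    by (simp add: \<alpha>_def \<gamma>_def)
  let ?F = "\<lambda>z::real^'n. (qs s z * (\<epsilon> * ((- (real CARD('n) / (2 * s)) + (norm z)\<^sup>2 / (4 * s\<^sup>2)) * (u \<bullet> z) + v \<bullet> z) / 2)) *\<^sub>R z"
  show ?thesis
  proof (subst vec_eq_iff, intro allI)
    fix j
    have "(\<integral>z. ?F z \<partial>lborel) $ j = (\<integral>z. ?F z $ j \<partial>lborel)"
      by (rule integral_bounded_linear[OF bounded_linear_vec_nth int, symmetric])
    also have "\<dots> = (\<integral>z. (\<epsilon> / 2) * ((\<Sum>i\<in>UNIV. (\<alpha> * u$i + v$i) * (qs s z * (z$i * z$j)))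
        + \<gamma> * (\<Sum>i\<in>UNIV. \<Sum>k\<in>UNIV. u$i * (qs s z * (z$i * z$j * (z$k * z$k))))) \<partial>lborel)"
      by (rule Bochner_Integration.integral_cong[OF refl]) (simp only: vector_scaleR_component real_scaleR_def cf expand_Lf)
    also have "\<dots> = (\<epsilon> / 2) * ((\<Sum>i\<in>UNIV. (\<alpha> * u$i + v$i) * (if i = j then 2 * s else 0))
        + \<gamma> * (\<Sum>i\<in>UNIV. \<Sum>k\<in>UNIV. u$i * (if i = j then (if k = j then 12 * s\<^sup>2 else 4 * s\<^sup>2) else 0)))"
    proof -
      have i2: "\<And>i j. integrable lborel (\<lambda>z::real^'n. qs s z * (z$i * z$j))" using qs_T2[OF s] by blast
      have v2: "\<And>i j. (\<integral>z. qs s (z::real^'n) * (z$i * z$j) \<partial>lborel) = (if i = j then 2 * s else 0)" using qs_T2[OF s] by blast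
      have i4: "\<And>i j k. integrable lborel (\<lambda>z::real^'n. qs s z * (z$i * z$j * (z$k * z$k)))" using qs_T4[OF s] by blast
      have v4: "\<And>i j k. (\<integral>z. qs s (z::real^'n) * (z$i * z$j * (z$k * z$k)) \<partial>lborel) = (if i = j then (if k = j then 12 * s\<^sup>2 else 4 * s\<^sup>2) else 0)"
        using qs_T4[OF s] by blast
      have iS1: "integrable lborel (\<lambda>z::real^'n. \<Sum>i\<in>UNIV. (\<alpha> * u$i + v$i) * (qs s z * (z$i * z$j)))"
        using i2 by (intro Bochner_Integration.integrable_sum Bochner_Integration.integrable_mult_right) auto
      have iS2: "integrable lborel (\<lambda>z::real^'n. \<gamma> * (\<Sum>i\<in>UNIV. \<Sum>k\<in>UNIV. u$i * (qs s z * (z$i * z$j * (z$k * z$k)))))"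
        using i4 by (intro Bochner_Integration.integrable_sum Bochner_Integration.integrable_mult_right) auto
      have S1: "(\<integral>z. (\<Sum>i\<in>UNIV. (\<alpha> * u$i + v$i) * (qs s z * (z$i * z$j))) \<partial>lborel)
          = (\<Sum>i\<in>UNIV. (\<alpha> * u$i + v$i) * (if i = j then 2 * s else 0))"
        by (subst Bochner_Integration.integral_sum) (use i2 v2 in auto)
      have S2: "(\<integral>z. \<gamma> * (\<Sum>i\<in>UNIV. \<Sum>k\<in>UNIV. u$i * (qs s z * (z$i * z$j * (z$k * z$k)))) \<partial>lborel)
          = \<gamma> * (\<Sum>i\<in>UNIV. \<Sum>k\<in>UNIV. u$i * (if i = j then (if k = j then 12 * s\<^sup>2 else 4 * s\<^sup>2) else 0))"
        apply (subst Bochner_Integration.integral_mult_right_zero)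
        apply (subst Bochner_Integration.integral_sum)
         apply (use i4 in \<open>auto intro!: Bochner_Integration.integrable_sum\<close>)[1]
        apply (subst Bochner_Integration.integral_sum)
         apply (use i4 in auto)[1]
        apply (simp add: v4)
        done
      show ?thesis
        by (subst Bochner_Integration.integral_mult_right_zero, subst Bochner_Integration.integral_add[OF iS1 iS2])
           (simp only: S1 S2)
    qed
    also have "\<dots> = (\<epsilon> / 2) * ((\<alpha> * u$j + v$j) * (2 * s) + \<gamma> * u$j * (12 * s\<^sup>2 + (real CARD('n) - 1) * (4 * s\<^sup>2)))"
    proof -
      have a: "(\<Sum>i\<in>UNIV. (\<alpha> * u$i + v$i) * (if i = j then 2 * s else 0)) = (\<alpha> * u$j + v$j) * (2 * s)"
        by (simp add: if_distrib cong: if_cong)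
      have "(\<Sum>i\<in>UNIV. \<Sum>k\<in>UNIV. u$i * (if i = j then (if k = j then 12 * s\<^sup>2 else 4 * s\<^sup>2) else 0))
          = (\<Sum>i\<in>UNIV. if i = j then u$i * (\<Sum>k\<in>UNIV. if k = j then 12 * s\<^sup>2 else 4 * s\<^sup>2) else 0)"
        by (rule sum.cong) (auto simp: sum_distrib_left)
      also have "\<dots> = u$j * (12 * s\<^sup>2 + (real CARD('n) - 1) * (4 * s\<^sup>2))"
        by (simp add: sum_if_const)
      finally have b: "(\<Sum>i\<in>UNIV. \<Sum>k\<in>UNIV. u$i * (if i = j then (if k = j then 12 * s\<^sup>2 else 4 * s\<^sup>2) else 0))
          = u$j * (12 * s\<^sup>2 + (real CARD('n) - 1) * (4 * s\<^sup>2))" .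
      show ?thesis unfolding a b by (simp add: mult.assoc)
    qed
    also have "\<dots> = (\<epsilon> *\<^sub>R (u + s *\<^sub>R v)) $ j"
      using s by (simp add: \<alpha>_def \<gamma>_def field_simps power2_eq_square)
    finally show "(\<integral>z. ?F z \<partial>lborel) $ j = (\<epsilon> *\<^sub>R (u + s *\<^sub>R v)) $ j" .
  qed
qed


lemma Lf_bound:
  fixes u v z :: "real^'n::finite"
  assumes c: "c > 0" and sc: "s \<ge> c" and Uu: "norm u \<le> Ub" and Vv: "norm v \<le> Vb"
  shows "\<bar>(- (real CARD('n) / (2 * s)) + (norm z)\<^sup>2 / (4 * s\<^sup>2)) * (u \<bullet> z) + v \<bullet> z\<bar>
     \<le> (real CARD('n) * Ub / (2 * c) + Ub / (4 * c\<^sup>2) + Vb) * (1 + norm z) ^ 3"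
proof -
  define t where "t = norm z"
  define d where "d = real CARD('n)"
  have t0: "t \<ge> 0" by (simp add: t_def)
  have s: "s > 0" using c sc by linarith
  have Ub0: "Ub \<ge> 0" using Uu norm_ge_zero order_trans by blast
  have Vb0: "Vb \<ge> 0" using Vv norm_ge_zero order_trans by blast
  have d0: "d \<ge> 0" by (simp add: d_def)
  have cf: "\<bar>- (d / (2 * s)) + t\<^sup>2 / (4 * s\<^sup>2)\<bar> \<le> d / (2 * c) + t\<^sup>2 / (4 * c\<^sup>2)"
  proof -
    have "\<bar>- (d / (2 * s)) + t\<^sup>2 / (4 * s\<^sup>2)\<bar> \<le> d / (2 * s) + t\<^sup>2 / (4 * s\<^sup>2)"
      using s d0 by (simp add: abs_le_iff)
    also have "d / (2 * s) \<le> d / (2 * c)" using c sc d0 by (intro divide_left_mono) auto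
    also have "t\<^sup>2 / (4 * s\<^sup>2) \<le> t\<^sup>2 / (4 * c\<^sup>2)"
      using c sc by (intro divide_left_mono mult_left_mono power_mono) auto
    finally show ?thesis by simp
  qed
  have uz: "\<bar>u \<bullet> z\<bar> \<le> Ub * t"
    using Cauchy_Schwarz_ineq2[of u z] Uu t0 unfolding t_def
    by (meson mult_right_mono norm_ge_zero order_trans)
  have vz: "\<bar>v \<bullet> z\<bar> \<le> Vb * t"
    using Cauchy_Schwarz_ineq2[of v z] Vv t0 unfolding t_def
    by (meson mult_right_mono norm_ge_zero order_trans)
  have "\<bar>(- (d / (2 * s)) + t\<^sup>2 / (4 * s\<^sup>2)) * (u \<bullet> z) + v \<bullet> z\<bar>
      \<le> \<bar>- (d / (2 * s)) + t\<^sup>2 / (4 * s\<^sup>2)\<bar> * \<bar>u \<bullet> z\<bar> + \<bar>v \<bullet> z\<bar>"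
    by (metis abs_mult abs_triangle_ineq)
  also have "\<dots> \<le> (d / (2 * c) + t\<^sup>2 / (4 * c\<^sup>2)) * (Ub * t) + Vb * t"
    using cf uz vz by (intro add_mono mult_mono) auto
  also have "\<dots> = d * Ub / (2 * c) * t + Ub / (4 * c\<^sup>2) * t ^ 3 + Vb * t"
    by (simp add: field_simps power2_eq_square power3_eq_cube)
  also have "\<dots> \<le> d * Ub / (2 * c) * (1 + t) ^ 3 + Ub / (4 * c\<^sup>2) * (1 + t) ^ 3 + Vb * (1 + t) ^ 3"
  proof -
    have a: "t \<le> (1 + t) ^ 3"
    proof -
      have "t \<le> 1 + t" by simp
      also have "\<dots> = (1 + t) ^ 1" by simp
      also have "\<dots> \<le> (1 + t) ^ 3" by (rule power_increasing) (use t0 in auto)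
      finally show ?thesis .
    qed
    have b: "t ^ 3 \<le> (1 + t) ^ 3" by (rule power_mono) (use t0 in auto)
    show ?thesis using a b c Ub0 Vb0 d0
      by (intro add_mono mult_left_mono) auto
  qed
  also have "\<dots> = (d * Ub / (2 * c) + Ub / (4 * c\<^sup>2) + Vb) * (1 + t) ^ 3"
    by (simp add: algebra_simps)
  finally show ?thesis unfolding t_def d_def .
qed


lemma main_x:
  fixes u v :: "real^'n::finite" and g :: "real^'n \<Rightarrow> real"
  assumes c: "c > 0" and sc: "s \<ge> c" and Uu: "norm u \<le> Ub" and Vv: "norm v \<le> Vb"
    and \<epsilon>: "0 < \<epsilon>"
    and gm[measurable]: "g \<in> borel_measurable borel" and gb: "\<And>z. \<bar>g z\<bar> \<le> Cg * (1 + norm z) ^ Ng" and Cg: "Cg \<ge> 0"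
  defines "Lf \<equiv> \<lambda>z. (- (real CARD('n) / (2 * s)) + (norm z)\<^sup>2 / (4 * s\<^sup>2)) * (u \<bullet> z) + v \<bullet> z"
  defines "M \<equiv> \<lambda>z. min 1 (exp (\<epsilon> * Lf z)) - 1"
    and "Cst \<equiv> real CARD('n) * Ub / (2 * c) + Ub / (4 * c\<^sup>2) + Vb"
  shows "integrable lborel (\<lambda>z. (qs s z * M z) *\<^sub>R z) \<and> integrable lborel (\<lambda>z. g z * qs s z * M z)
    \<and> norm ((\<integral>z. (qs s z * M z) *\<^sub>R z \<partial>lborel) - \<epsilon> *\<^sub>R (u + s *\<^sub>R v)) \<le> Cst\<^sup>2 * Wb CARD('n) 7 s * \<epsilon>\<^sup>2
    \<and> \<bar>\<integral>z. g z * qs s z * M z \<partial>lborel\<bar> \<le> Cg * Cst * Wb CARD('n) (Ng + 3) s * \<epsilon>"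
proof -
  have s: "s > 0" using c sc by linarith
  have Ub0: "Ub \<ge> 0" using Uu norm_ge_zero order_trans by blast
  have Vb0: "Vb \<ge> 0" using Vv norm_ge_zero order_trans by blast
  have Cst0: "Cst \<ge> 0" unfolding Cst_def using c Ub0 Vb0 by simp
  have Lf_m[measurable]: "Lf \<in> borel_measurable borel" unfolding Lf_def by measurable
  have M_m[measurable]: "M \<in> borel_measurable borel" unfolding M_def by measurable
  have Lb: "\<bar>Lf z\<bar> \<le> Cst * (1 + norm z) ^ 3" for z
    unfolding Lf_def Cst_def by (rule Lf_bound[OF c sc Uu Vv])
  have qp: "qs s z > 0" for z :: "real^'n" by (rule qs_pos[OF s])
  have qa: "\<bar>qs s z\<bar> = qs s z" for z :: "real^'n" using qp[of z] by simp
  have W: "\<And>m. integrable lborel (\<lambda>z::real^'n. qs s z * (1 + norm z) ^ m)"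
    "\<And>m. (\<integral>z. qs s (z::real^'n) * (1 + norm z) ^ m \<partial>lborel) \<le> Wb CARD('n) m s"
    using qs_weight[OF s] by blast+
  have eL: "\<bar>\<epsilon> * Lf z\<bar> \<le> \<epsilon> * Cst * (1 + norm z) ^ 3" for z
    using Lb[of z] \<epsilon> by (simp add: abs_mult mult.assoc)
  have Mb: "\<bar>M z\<bar> \<le> \<epsilon> * Cst * (1 + norm z) ^ 3" for z
    unfolding M_def using minexp_bound1[of "\<epsilon> * Lf z"] eL[of z] by linarith
  define R where "R z = M z - (\<epsilon> * Lf z - \<bar>\<epsilon> * Lf z\<bar>) / 2" for z
  have R_m[measurable]: "R \<in> borel_measurable borel" unfolding R_def[abs_def] by measurable
  have Rb: "\<bar>R z\<bar> \<le> \<epsilon>\<^sup>2 * Cst\<^sup>2 * (1 + norm z) ^ 6" for z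
  proof -
    have "\<bar>R z\<bar> \<le> (\<epsilon> * Lf z)\<^sup>2" unfolding R_def M_def by (rule minexp_bound2)
    also have "\<dots> = \<bar>\<epsilon> * Lf z\<bar>\<^sup>2" by simp
    also have "\<dots> \<le> (\<epsilon> * Cst * (1 + norm z) ^ 3)\<^sup>2" by (rule power_mono[OF eL]) simp
    also have "\<dots> = \<epsilon>\<^sup>2 * Cst\<^sup>2 * (1 + norm z) ^ 6" by (simp add: power_mult_distrib power_mult[symmetric])
    finally show ?thesis .
  qed
  have nz: "norm z \<le> 1 + norm z" for z :: "real^'n" by simp
  define F0 where "F0 z = (qs s z * M z) *\<^sub>R z" for z :: "real^'n"
  define F1 where "F1 z = (qs s z * (\<epsilon> * Lf z / 2)) *\<^sub>R z" for z :: "real^'n"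
  define F2 where "F2 z = (qs s z * (\<bar>\<epsilon> * Lf z\<bar> / 2)) *\<^sub>R z" for z :: "real^'n"
  define F3 where "F3 z = (qs s z * R z) *\<^sub>R z" for z :: "real^'n"
  have F_eq: "F0 z = F1 z - F2 z + F3 z" for z
  proof -
    have "F1 z - F2 z + F3 z = (qs s z * (\<epsilon> * Lf z / 2) - qs s z * (\<bar>\<epsilon> * Lf z\<bar> / 2) + qs s z * R z) *\<^sub>R z"
      by (simp add: F1_def F2_def F3_def scaleR_left_diff_distrib scaleR_left_distrib)
    also have "qs s z * (\<epsilon> * Lf z / 2) - qs s z * (\<bar>\<epsilon> * Lf z\<bar> / 2) + qs s z * R z = qs s z * M z"
      unfolding R_def by (simp add: field_simps)
    finally show ?thesis unfolding F0_def by simp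
  qed
  have bnd: "norm ((qs s z * X) *\<^sub>R z) \<le> K * (qs s z * (1 + norm z) ^ (m + 1))"
    if "\<bar>X\<bar> \<le> K * (1 + norm z) ^ m" for X K m and z :: "real^'n"
  proof -
    have "norm ((qs s z * X) *\<^sub>R z) = qs s z * (\<bar>X\<bar> * norm z)"
      using qp[of z] by (simp add: abs_mult)
    also have "\<dots> \<le> qs s z * (K * (1 + norm z) ^ m * (1 + norm z))"
      using that qp[of z] by (intro mult_left_mono mult_mono) auto
    finally show ?thesis by (simp add: algebra_simps)
  qed
  have iF0: "integrable lborel F0"
  proof (rule Bochner_Integration.integrable_bound[where f="\<lambda>z. (\<epsilon> * Cst) * (qs s z * (1 + norm z) ^ 4)"])
    show "integrable lborel (\<lambda>z::real^'n. (\<epsilon> * Cst) * (qs s z * (1 + norm z) ^ 4))" using W(1) by simp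
    show "F0 \<in> borel_measurable lborel" unfolding F0_def[abs_def] by measurable
    show "AE z in lborel. norm (F0 z) \<le> norm ((\<epsilon> * Cst) * (qs s z * (1 + norm z) ^ 4))"
      using bnd[OF Mb] qp \<epsilon> Cst0 by (auto intro!: always_eventually simp: F0_def abs_mult qa)
  qed
  have iF1: "integrable lborel F1"
  proof (rule Bochner_Integration.integrable_bound[where f="\<lambda>z. (\<epsilon> * Cst) * (qs s z * (1 + norm z) ^ 4)"])
    show "integrable lborel (\<lambda>z::real^'n. (\<epsilon> * Cst) * (qs s z * (1 + norm z) ^ 4))" using W(1) by simp
    show "F1 \<in> borel_measurable lborel" unfolding F1_def[abs_def] by measurable
    have "\<bar>\<epsilon> * Lf z / 2\<bar> \<le> \<epsilon> * Cst * (1 + norm z) ^ 3" for z using eL[of z] by simp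
    from bnd[OF this] show "AE z in lborel. norm (F1 z) \<le> norm ((\<epsilon> * Cst) * (qs s z * (1 + norm z) ^ 4))"
      using qp \<epsilon> Cst0 by (auto intro!: always_eventually simp: F1_def abs_mult qa)
  qed
  have iF2: "integrable lborel F2"
  proof (rule Bochner_Integration.integrable_bound[where f="\<lambda>z. (\<epsilon> * Cst) * (qs s z * (1 + norm z) ^ 4)"])
    show "integrable lborel (\<lambda>z::real^'n. (\<epsilon> * Cst) * (qs s z * (1 + norm z) ^ 4))" using W(1) by simp
    show "F2 \<in> borel_measurable lborel" unfolding F2_def[abs_def] by measurable
    have "\<bar>\<bar>\<epsilon> * Lf z\<bar> / 2\<bar> \<le> \<epsilon> * Cst * (1 + norm z) ^ 3" for z using eL[of z] by simp
    from bnd[OF this] show "AE z in lborel. norm (F2 z) \<le> norm ((\<epsilon> * Cst) * (qs s z * (1 + norm z) ^ 4))"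
      using qp \<epsilon> Cst0 by (auto intro!: always_eventually simp: F2_def abs_mult qa)
  qed
  have F3_eq: "F3 z = F0 z - F1 z + F2 z" for z using F_eq[of z] by simp
  have iF3: "integrable lborel F3"
    unfolding F3_eq[abs_def] using iF0 iF1 iF2 by simp
  have IF2: "(\<integral>z. F2 z \<partial>lborel) = 0"
  proof (rule odd_integral_zero)
    show "F2 \<in> borel_measurable borel" unfolding F2_def[abs_def] by measurable
    have "Lf (- z) = - Lf z" for z unfolding Lf_def by simp
    moreover have "qs s (- z) = qs s z" for z :: "real^'n" by (simp add: qs_def)
    ultimately show "F2 (- z) = - F2 z" for z unfolding F2_def by simp
  qed
  have IF1: "(\<integral>z. F1 z \<partial>lborel) = \<epsilon> *\<^sub>R (u + s *\<^sub>R v)"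
    using exact_term[OF s, of \<epsilon> u v] iF1 unfolding F1_def Lf_def by simp
  have IF0: "(\<integral>z. F0 z \<partial>lborel) = (\<integral>z. F1 z \<partial>lborel) - (\<integral>z. F2 z \<partial>lborel) + (\<integral>z. F3 z \<partial>lborel)"
    unfolding F_eq using iF1 iF2 iF3
    by (simp add: Bochner_Integration.integral_add Bochner_Integration.integral_diff)
  have part1: "norm ((\<integral>z. F0 z \<partial>lborel) - \<epsilon> *\<^sub>R (u + s *\<^sub>R v)) \<le> Cst\<^sup>2 * Wb CARD('n) 7 s * \<epsilon>\<^sup>2"
  proof -
    have "norm ((\<integral>z. F0 z \<partial>lborel) - \<epsilon> *\<^sub>R (u + s *\<^sub>R v)) = norm (\<integral>z. F3 z \<partial>lborel)"
      unfolding IF0 IF1 IF2 by simp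
    also have "\<dots> \<le> (\<integral>z. norm (F3 z) \<partial>lborel)" by (rule integral_norm_bound)
    also have "\<dots> \<le> (\<integral>z. (\<epsilon>\<^sup>2 * Cst\<^sup>2) * (qs s (z::real^'n) * (1 + norm z) ^ 7) \<partial>lborel)"
    proof (rule Bochner_Integration.integral_mono)
      show "integrable lborel (\<lambda>z. norm (F3 z))" using iF3 by simp
      show "integrable lborel (\<lambda>z::real^'n. (\<epsilon>\<^sup>2 * Cst\<^sup>2) * (qs s z * (1 + norm z) ^ 7))" using W(1) by simp
      show "norm (F3 z) \<le> (\<epsilon>\<^sup>2 * Cst\<^sup>2) * (qs s z * (1 + norm z) ^ 7)" for z
        using bnd[OF Rb, of z] unfolding F3_def by simp
    qed
    also have "\<dots> = (\<epsilon>\<^sup>2 * Cst\<^sup>2) * (\<integral>z. qs s (z::real^'n) * (1 + norm z) ^ 7 \<partial>lborel)" by simp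
    also have "\<dots> \<le> (\<epsilon>\<^sup>2 * Cst\<^sup>2) * Wb CARD('n) 7 s" by (rule mult_left_mono[OF W(2)]) simp
    finally show ?thesis by (simp add: algebra_simps)
  qed
  have Gb: "\<bar>g z * qs s z * M z\<bar> \<le> (Cg * (\<epsilon> * Cst)) * (qs s z * (1 + norm z) ^ (Ng + 3))" for z
  proof -
    have "\<bar>g z * qs s z * M z\<bar> = qs s z * (\<bar>g z\<bar> * \<bar>M z\<bar>)" using qp[of z] by (simp add: abs_mult)
    also have "\<dots> \<le> qs s z * ((Cg * (1 + norm z) ^ Ng) * (\<epsilon> * Cst * (1 + norm z) ^ 3))"
      using gb[of z] Mb[of z] qp[of z] by (intro mult_left_mono mult_mono) auto
    finally show ?thesis by (simp add: power_add algebra_simps)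
  qed
  have iG: "integrable lborel (\<lambda>z. g z * qs s z * M z)"
  proof (rule Bochner_Integration.integrable_bound[where f="\<lambda>z. (Cg * (\<epsilon> * Cst)) * (qs s z * (1 + norm z) ^ (Ng + 3))"])
    show "integrable lborel (\<lambda>z::real^'n. (Cg * (\<epsilon> * Cst)) * (qs s z * (1 + norm z) ^ (Ng + 3)))" using W(1) by simp
    show "(\<lambda>z. g z * qs s z * M z) \<in> borel_measurable lborel" by measurable
    show "AE z in lborel. norm (g z * qs s z * M z) \<le> norm ((Cg * (\<epsilon> * Cst)) * (qs s z * (1 + norm z) ^ (Ng + 3)))"
      using Gb qp Cg \<epsilon> Cst0 by (auto intro!: always_eventually simp: abs_mult qa)
  qed
  have part2: "\<bar>\<integral>z. g z * qs s z * M z \<partial>lborel\<bar> \<le> Cg * Cst * Wb CARD('n) (Ng + 3) s * \<epsilon>"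
  proof -
    have "\<bar>\<integral>z. g z * qs s z * M z \<partial>lborel\<bar> \<le> (\<integral>z. \<bar>g z * qs s z * M z\<bar> \<partial>lborel)"
      using integral_norm_bound[of lborel "\<lambda>z. g z * qs s z * M z"] by simp
    also have "\<dots> \<le> (\<integral>z. (Cg * (\<epsilon> * Cst)) * (qs s (z::real^'n) * (1 + norm z) ^ (Ng + 3)) \<partial>lborel)"
      by (rule Bochner_Integration.integral_mono) (use iG W(1) Gb in auto)
    also have "\<dots> = (Cg * (\<epsilon> * Cst)) * (\<integral>z. qs s (z::real^'n) * (1 + norm z) ^ (Ng + 3) \<partial>lborel)" by simp
    also have "\<dots> \<le> (Cg * (\<epsilon> * Cst)) * Wb CARD('n) (Ng + 3) s"
      by (rule mult_left_mono[OF W(2)]) (use Cg \<epsilon> Cst0 in simp)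
    finally show ?thesis by (simp add: algebra_simps)
  qed
  show ?thesis using iF0 iG part1 part2 unfolding F0_def by blast
qed


lemma Wb_growth:
  fixes f :: "'a::real_normed_vector \<Rightarrow> real"
  assumes f: "\<And>x. 0 < f x" "\<And>x. f x \<le> E * (1 + norm x)" and C: "C \<ge> 0"
  shows "poly_growth (\<lambda>x. C * Wb d m (f x))"
  unfolding poly_growth_def
proof (intro exI allI)
  fix x :: 'a
  have "f 0 \<le> E" using f(2)[of 0] by simp
  then have E: "E \<ge> 0" using f(1)[of 0] by linarith
  have p1: "1 \<le> (1 + norm x) ^ m" by (rule one_le_power) simp
  have "(8 * f x) ^ m \<le> (8 * (E * (1 + norm x))) ^ m"
    using f[of x] by (intro power_mono) auto
  also have "\<dots> = (8 * E) ^ m * (1 + norm x) ^ m" by (simp add: power_mult_distrib)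
  finally have a: "(8 * f x) ^ m \<le> (8 * E) ^ m * (1 + norm x) ^ m" .
  have "Wb d m (f x) = 2 ^ m * (2 + fact m * (8 * f x) ^ m * 2 ^ d)" by (simp add: Wb_def)
  also have "\<dots> \<le> 2 ^ m * (2 * (1 + norm x) ^ m + fact m * ((8 * E) ^ m * (1 + norm x) ^ m) * 2 ^ d)"
    using a p1 by (intro mult_left_mono add_mono mult_right_mono) auto
  also have "\<dots> = 2 ^ m * (2 + fact m * (8 * E) ^ m * 2 ^ d) * (1 + norm x) ^ m"
    by (simp add: algebra_simps)
  finally have "Wb d m (f x) \<le> 2 ^ m * (2 + fact m * (8 * E) ^ m * 2 ^ d) * (1 + norm x) ^ m" .
  moreover have "Wb d m (f x) \<ge> 0" using f[of x] by (simp add: Wb_def)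
  ultimately show "\<bar>C * Wb d m (f x)\<bar> \<le> (C * (2 ^ m * (2 + fact m * (8 * E) ^ m * 2 ^ d))) * (1 + norm x) ^ m"
    using C by (simp add: abs_mult mult.assoc mult_left_mono)
qed

theorem lemma3:
  fixes D \<rho> :: "real^'n::finite \<Rightarrow> real" and g :: "real^'n \<Rightarrow> real"
  assumes "Ck 4 D" and "Ck 4 \<rho>" and "\<forall>x. \<rho> x > 0"
    and "\<forall>is. 1 \<le> length is \<and> length is \<le> 4 \<longrightarrow> (\<exists>B. \<forall>x. \<bar>ipd is D x\<bar> \<le> B)"
    and "\<forall>is. 1 \<le> length is \<and> length is \<le> 4 \<longrightarrow> (\<exists>B. \<forall>x. \<bar>ipd is (\<lambda>y. ln (\<rho> y)) x\<bar> \<le> B)"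
    and "poly_growth (\<lambda>x. norm (hess D x))"
    and "poly_growth (\<lambda>x. norm (hess (\<lambda>y. ln (\<rho> y)) x))"
    and "\<exists>c>0. \<forall>x. D x \<ge> c"
    and "g \<in> poly_fun"
  shows "\<exists>K Ks. poly_growth K \<and> poly_growth Ks \<and>
     (\<forall>x \<epsilon>. 0 < \<epsilon> \<and> \<epsilon> \<le> 1 \<longrightarrow>
        integrable lborel (\<lambda>z. (qk D x z * (acc D \<rho> x z \<epsilon> - 1)) *\<^sub>R z) \<and>
        integrable lborel (\<lambda>z. g z * qk D x z * (acc D \<rho> x z \<epsilon> - 1)) \<and>
        norm ((\<integral>z. (qk D x z * (acc D \<rho> x z \<epsilon> - 1)) *\<^sub>R z \<partial>lborel) - \<epsilon> *\<^sub>R drift D \<rho> x)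
          \<le> K x * \<epsilon>\<^sup>2 \<and>
        \<bar>\<integral>z. g z * qk D x z * (acc D \<rho> x z \<epsilon> - 1) \<partial>lborel\<bar> \<le> Ks x * \<epsilon>)"
proof -
  note CD = assms(1) and C\<rho> = assms(2) and \<rho>p = assms(3)
  have k: "(4::nat) \<ge> 1" by simp
  obtain c where c: "c > 0" and Dc: "\<And>x. D x \<ge> c" using assms(8) by blast
  have Dp: "D x > 0" for x using c Dc[of x] by linarith
  have "\<forall>i. \<exists>B. \<forall>x. \<bar>pd i D x\<bar> \<le> B"
  proof
    fix i show "\<exists>B. \<forall>x. \<bar>pd i D x\<bar> \<le> B" using assms(4)[rule_format, of "[i]"] by simp
  qed
  then obtain BDf where BDf: "\<And>i x. \<bar>pd i D x\<bar> \<le> BDf i" by metis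
  have "\<forall>i. \<exists>B. \<forall>x. \<bar>pd i (\<lambda>y. ln (\<rho> y)) x\<bar> \<le> B"
  proof
    fix i show "\<exists>B. \<forall>x. \<bar>pd i (\<lambda>y. ln (\<rho> y)) x\<bar> \<le> B" using assms(5)[rule_format, of "[i]"] by simp
  qed
  then obtain BVf where BVf: "\<And>i x. \<bar>pd i (\<lambda>y. ln (\<rho> y)) x\<bar> \<le> BVf i" by metis
  define BD where "BD = (\<Sum>i\<in>UNIV. \<bar>BDf i\<bar>)"
  define BV where "BV = (\<Sum>i\<in>UNIV. \<bar>BVf i\<bar>)"
  have BD: "\<bar>pd i D x\<bar> \<le> BD" for i x
  proof -
    have "\<bar>BDf i\<bar> \<le> BD" unfolding BD_def by (rule member_le_sum) auto
    then show ?thesis using BDf[of i x] by linarith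
  qed
  have BV: "\<bar>pd i (\<lambda>y. ln (\<rho> y)) x\<bar> \<le> BV" for i x
  proof -
    have "\<bar>BVf i\<bar> \<le> BV" unfolding BV_def by (rule member_le_sum) auto
    then show ?thesis using BVf[of i x] by linarith
  qed
  have BD0: "BD \<ge> 0" unfolding BD_def by (simp add: sum_nonneg)
  define d where "d = real CARD('n)"
  define Ub where "Ub = d * BD"
  define Vb where "Vb = d * BV"
  have Uu: "norm (grad D x) \<le> Ub" for x
  proof -
    have "norm (grad D x) \<le> (\<Sum>i\<in>UNIV. \<bar>grad D x $ i\<bar>)" by (rule norm_le_l1_cart)
    also have "\<dots> \<le> (\<Sum>i\<in>(UNIV::'n set). BD)" unfolding grad_def using BD by (intro sum_mono) simp
    finally show ?thesis by (simp add: Ub_def d_def)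
  qed
  have Vv: "norm (grad (\<lambda>y. ln (\<rho> y)) x) \<le> Vb" for x
  proof -
    have "norm (grad (\<lambda>y. ln (\<rho> y)) x) \<le> (\<Sum>i\<in>UNIV. \<bar>grad (\<lambda>y. ln (\<rho> y)) x $ i\<bar>)" by (rule norm_le_l1_cart)
    also have "\<dots> \<le> (\<Sum>i\<in>(UNIV::'n set). BV)" unfolding grad_def using BV by (intro sum_mono) simp
    finally show ?thesis by (simp add: Vb_def d_def)
  qed
  define E where "E = \<bar>D 0\<bar> + BD * d"
  have DE: "D x \<le> E * (1 + norm x)" for x
  proof -
    have "\<bar>D x - D 0\<bar> \<le> BD * (\<Sum>i\<in>UNIV. \<bar>x$i - 0$i\<bar>)"
      by (rule lip_axis[OF Ck_line_deriv_at[OF CD k] BD])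
    also have "(\<Sum>i\<in>UNIV. \<bar>x$i - 0$i\<bar>) \<le> (\<Sum>i\<in>(UNIV::'n set). norm x)"
      by (intro sum_mono) (simp add: component_le_norm_cart)
    finally have "\<bar>D x - D 0\<bar> \<le> BD * (d * norm x)" using BD0 by (simp add: d_def mult_left_mono order_trans)
    then have "D x - D 0 \<le> BD * d * norm x" by (simp add: abs_le_iff mult.assoc)
    then have "D x \<le> \<bar>D 0\<bar> + BD * d * norm x" using abs_ge_self[of "D 0"] by linarith
    also have "\<dots> \<le> E * (1 + norm x)" unfolding E_def using BD0
      by (simp add: algebra_simps d_def)
    finally show ?thesis .
  qed
  obtain Cg Ng where Cg: "Cg \<ge> 0" and gb: "\<And>z. \<bar>g z\<bar> \<le> Cg * (1 + norm z) ^ Ng"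
    using poly_fun_bound[OF assms(9)] by blast
  have gm: "g \<in> borel_measurable borel" by (rule poly_fun_meas[OF assms(9)])
  define Cst where "Cst = d * Ub / (2 * c) + Ub / (4 * c\<^sup>2) + Vb"
  have Ub0: "Ub \<ge> 0" using Uu norm_ge_zero order_trans by blast
  have Vb0: "Vb \<ge> 0" using Vv norm_ge_zero order_trans by blast
  have Cst0: "Cst \<ge> 0" unfolding Cst_def using c Ub0 Vb0 by (simp add: d_def)
  define K where "K x = Cst\<^sup>2 * Wb CARD('n) 7 (D x)" for x
  define Ks where "Ks x = Cg * Cst * Wb CARD('n) (Ng + 3) (D x)" for x
  have pK: "poly_growth K" unfolding K_def[abs_def]
    by (rule Wb_growth[OF Dp DE]) simp
  have pKs: "poly_growth Ks" unfolding Ks_def[abs_def]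
    by (rule Wb_growth[OF Dp DE]) (use Cg Cst0 in simp)
  have main: "integrable lborel (\<lambda>z. (qk D x z * (acc D \<rho> x z \<epsilon> - 1)) *\<^sub>R z) \<and>
        integrable lborel (\<lambda>z. g z * qk D x z * (acc D \<rho> x z \<epsilon> - 1)) \<and>
        norm ((\<integral>z. (qk D x z * (acc D \<rho> x z \<epsilon> - 1)) *\<^sub>R z \<partial>lborel) - \<epsilon> *\<^sub>R drift D \<rho> x)
          \<le> K x * \<epsilon>\<^sup>2 \<and>
        \<bar>\<integral>z. g z * qk D x z * (acc D \<rho> x z \<epsilon> - 1) \<partial>lborel\<bar> \<le> Ks x * \<epsilon>"
    if \<epsilon>: "0 < \<epsilon>" for x \<epsilon>
  proof -
    have A: "acc D \<rho> x z \<epsilon> - 1 = min 1 (exp (\<epsilon> * ((- (real CARD('n) / (2 * D x)) + (norm z)\<^sup>2 / (4 * (D x)\<^sup>2)) * (grad D x \<bullet> z)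
            + grad (\<lambda>y. ln (\<rho> y)) x \<bullet> z))) - 1" for z
      using acc_eq[OF CD C\<rho> k Dp \<rho>p] by simp
    have dr: "drift D \<rho> x = grad D x + D x *\<^sub>R grad (\<lambda>y. ln (\<rho> y)) x" by (simp add: drift_def)
    show ?thesis
      unfolding A qk_qs dr K_def Ks_def
      using main_x[OF c Dc[of x] Uu[of x] Vv[of x] \<epsilon> gm gb Cg]
      unfolding Cst_def d_def by simp
  qed
  show ?thesis using pK pKs main by blast
qed

end
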